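(* Let $A\in\mathbb{R}^{n\times n}$ be Hurwitz, $B\in\mathbb{R}^{n\times m}$, $C\in\mathbb{R}^{p\times n}$, $\hat A\in\mathbb{R}^{r\times r}$, $\hat B\in\mathbb{R}^{r\times m}$, $\hat C\in\mathbb{R}^{p\times r}$, $\bar T>0$. Let $P_{\bar T}, P_{2, \bar T}$ and $\hat P_{\bar T}$ be the solutions to $$A P_{\bar T}+ P_{\bar T} A^T =-B B^T+e^{A \bar T}B B^T e^{A^T \bar T},\quad A P_{2, {\bar T}}+ P_{2, {\bar T}} \hat A^T =-B \hat B^T+e^{A \bar T}B \hat B^T e^{\hat A^T \bar T},$$ $$\hat A \hat P_{\bar T}+\hat P_{\bar T} \hat A^T =-\hat B \hat B^T+e^{\hat A \bar T}\hat B \hat B^T e^{\hat A^T \bar T},$$ respectively. Then $$\operatorname{tr}(C P_{\bar T} C^T)=\operatorname{tr}(B^T Q_{\bar T} B),\quad \operatorname{tr}(\hat C \hat P_{\bar T} \hat C^T)=\operatorname{tr}(\hat B^T \hat Q_{\bar T} \hat B),\quad \operatorname{tr}(C P_{2, \bar T} \hat C^T)=\operatorname{tr}(\hat B^T Q_{2, \bar T} B),$$ where the matrices $Q_{\bar T}, Q_{2, \bar T}$ and $\hat Q_{\bar T}$ satisfy $$A^T Q_{\bar T}+ Q_{\bar T} A =-C^T C+e^{A^T \bar T}C^T C e^{A \bar T},\quad \hat A^T Q_{2, {\bar T}}+ Q_{2, {\bar T}} A =-\hat C^T C+e^{\hat A^T \bar T} \hat C^T C e^{A \bar T},$$ $$\hat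 A^T \hat Q_{\bar T}+\hat Q_{\bar T} \hat A =-\hat C^T \hat C+e^{\hat A^T \bar T}\hat C^T \hat C e^{\hat A \bar T}.$$
   Context: $\operatorname{tr}$ denotes the trace of a matrix. *)

theory Defs
  imports "HOL-Analysis.Analysis"
begin

primrec matpow :: "real^'n^'n \<Rightarrow> nat \<Rightarrow> real^'n^'n" where
  "matpow M 0 = mat 1"
| "matpow M (Suc k) = M ** matpow M k"

definition mat_exp :: "real \<Rightarrow> real^'n^'n \<Rightarrow> real^'n^'n" where
  "mat_exp t M = (\<Sum>k. (t ^ k / fact k) *\<^sub>R matpow M k)"

definition hurwitz :: "real^'n^'n \<Rightarrow> bool" where
  "hurwitz M \<longleftrightarrow>
     (\<forall>z::complex. det ((\<chi> i j. (if i = j then z else 0) - complex_of_real (M $ i $ j)) :: complex^'n^'n) = 0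
        \<longrightarrow> Re z < 0)"

end

theory Submission
  imports Defs
begin

lemma mm_add_r: "((X::real^'a^'b) + Y) ** (Z::real^'c^'a) = X ** Z + Y ** Z"
  by (simp add: matrix_matrix_mult_def vec_eq_iff sum.distrib algebra_simps)
lemma mm_add_l: "(Z::real^'a^'b) ** ((X::real^'c^'a) + Y) = Z ** X + Z ** Y"
  by (simp add: matrix_matrix_mult_def vec_eq_iff sum.distrib algebra_simps)
lemma mm_neg_r: "(- (X::real^'a^'b)) ** (Z::real^'c^'a) = - (X ** Z)"
  by (simp add: matrix_matrix_mult_def vec_eq_iff sum_negf)
lemma mm_neg_l: "(Z::real^'a^'b) ** (- (X::real^'c^'a)) = - (Z ** X)"
  by (simp add: matrix_matrix_mult_def vec_eq_iff sum_negf)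
lemma mm_diff_r: "((X::real^'a^'b) - Y) ** (Z::real^'c^'a) = X ** Z - Y ** Z"
  by (simp add: matrix_matrix_mult_def vec_eq_iff sum_subtractf algebra_simps)
lemma mm_diff_l: "(Z::real^'a^'b) ** ((X::real^'c^'a) - Y) = Z ** X - Z ** Y"
  by (simp add: matrix_matrix_mult_def vec_eq_iff sum_subtractf algebra_simps)
lemma trace_neg: "trace (- (X::real^'a^'a)) = - trace X"
  by (simp add: trace_def sum_negf)

definition l1m :: "real^'a^'b \<Rightarrow> real" where
  "l1m X = (\<Sum>i\<in>UNIV. \<Sum>j\<in>UNIV. \<bar>X$i$j\<bar>)"

lemma l1m_row: "(\<Sum>j\<in>UNIV. \<bar>X$k$j\<bar>) \<le> l1m X"
  unfolding l1m_def
  by (rule member_le_sum) (auto intro: sum_nonneg)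

lemma l1m_nonneg: "0 \<le> l1m X"
  unfolding l1m_def by (auto intro!: sum_nonneg)

lemma l1m_mult: "l1m ((X::real^'a^'b) ** (Y::real^'c^'a)) \<le> l1m X * l1m Y"
proof -
  have "l1m (X ** Y) = (\<Sum>i\<in>UNIV. \<Sum>j\<in>UNIV. \<bar>\<Sum>k\<in>UNIV. X$i$k * Y$k$j\<bar>)"
    by (simp add: l1m_def matrix_matrix_mult_def)
  also have "\<dots> \<le> (\<Sum>i\<in>UNIV. \<Sum>j\<in>UNIV. \<Sum>k\<in>UNIV. \<bar>X$i$k\<bar> * \<bar>Y$k$j\<bar>)"
    by (intro sum_mono order_trans[OF sum_abs]) (simp add: abs_mult)
  also have "\<dots> = (\<Sum>i\<in>UNIV. \<Sum>k\<in>UNIV. \<bar>X$i$k\<bar> * (\<Sum>j\<in>UNIV. \<bar>Y$k$j\<bar>))"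
    by (simp add: sum_distrib_left sum.swap[of _ "UNIV::'c set"])
  also have "\<dots> \<le> (\<Sum>i\<in>UNIV. \<Sum>k\<in>UNIV. \<bar>X$i$k\<bar> * l1m Y)"
    by (intro sum_mono mult_left_mono l1m_row) auto
  also have "\<dots> = l1m X * l1m Y"
    by (simp add: l1m_def sum_distrib_right)
  finally show ?thesis .
qed

lemma norm_le_l1m: "norm (X::real^'a^'b) \<le> l1m X"
proof -
  have "norm X \<le> (\<Sum>i\<in>UNIV. norm (X$i))"
    unfolding norm_vec_def by (rule L2_set_le_sum) auto
  also have "\<dots> \<le> (\<Sum>i\<in>UNIV. \<Sum>j\<in>UNIV. \<bar>X$i$j\<bar>)"
    by (intro sum_mono) (simp add: norm_le_l1_cart)
  finally show ?thesis by (simp add: l1m_def)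
qed

lemma matpow_l1m: "l1m (matpow M k) \<le> l1m (mat 1 :: real^'a^'a) * l1m (M::real^'a^'a) ^ k"
proof (induction k)
  case 0 then show ?case by simp
next
  case (Suc k)
  have "l1m (matpow M (Suc k)) \<le> l1m M * l1m (matpow M k)"
    using l1m_mult by simp
  also have "\<dots> \<le> l1m M * (l1m (mat 1 :: real^'a^'a) * l1m M ^ k)"
    by (intro mult_left_mono Suc l1m_nonneg)
  finally show ?case by (simp add: algebra_simps)
qed

lemma exp_summable: "summable (\<lambda>k. (t ^ k / fact k) *\<^sub>R matpow (M::real^'a^'a) k)"
proof (rule summable_comparison_test)
  let ?c = "l1m (mat 1 :: real^'a^'a)"
  show "summable (\<lambda>k. ?c * (inverse (fact k) * (\<bar>t\<bar> * l1m M) ^ k))"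
    by (intro summable_mult summable_exp)
  show "\<exists>N. \<forall>k\<ge>N. norm ((t ^ k / fact k) *\<^sub>R matpow M k) \<le> ?c * (inverse (fact k) * (\<bar>t\<bar> * l1m M) ^ k)"
  proof (intro exI allI impI)
    fix k :: nat
    have "norm ((t ^ k / fact k) *\<^sub>R matpow M k) = \<bar>t\<bar> ^ k / fact k * norm (matpow M k)"
      by (simp add: power_abs)
    also have "\<dots> \<le> \<bar>t\<bar> ^ k / fact k * (?c * l1m M ^ k)"
      by (intro mult_left_mono order_trans[OF norm_le_l1m matpow_l1m]) auto
    also have "\<dots> = ?c * (inverse (fact k) * (\<bar>t\<bar> * l1m M) ^ k)"
      by (simp add: power_mult_distrib field_simps)
    finally show "norm ((t ^ k / fact k) *\<^sub>R matpow M k) \<le> ?c * (inverse (fact k) * (\<bar>t\<bar> * l1m M) ^ k)" .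
  qed
qed

lemma lin_lmul: "bounded_linear (\<lambda>X::real^'c^'a. (A::real^'a^'b) ** X)"
  unfolding linear_conv_bounded_linear[symmetric]
  by (rule linearI) (simp_all add: mm_add_l matrix_scalar_ac scalar_matrix_assoc)

lemma lin_rmul: "bounded_linear (\<lambda>X::real^'a^'b. X ** (A::real^'c^'a))"
  unfolding linear_conv_bounded_linear[symmetric]
  by (rule linearI) (simp_all add: mm_add_r scalar_matrix_assoc)

lemma lin_transpose: "bounded_linear (\<lambda>X::real^'a^'b. transpose X)"
  unfolding linear_conv_bounded_linear[symmetric]
  by (rule linearI) (simp_all add: transpose_scalar, simp add: transpose_def vec_eq_iff)

lemma matpow_comm: "M ** matpow M k = matpow M k ** (M::real^'a^'a)"
  by (induction k) (simp_all add: matrix_mul_assoc)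

lemma matpow_transpose: "transpose (matpow M k) = matpow (transpose M) k"
proof (induction k)
  case 0 then show ?case by simp
next
  case (Suc k)
  then show ?case by (simp add: matrix_transpose_mul matpow_comm)
qed

lemma mat_exp_comm: "M ** mat_exp t M = mat_exp t M ** (M::real^'a^'a)"
proof -
  have "M ** mat_exp t M = (\<Sum>k. M ** ((t ^ k / fact k) *\<^sub>R matpow M k))"
    unfolding mat_exp_def by (rule bounded_linear.suminf[OF lin_lmul exp_summable])
  also have "\<dots> = (\<Sum>k. ((t ^ k / fact k) *\<^sub>R matpow M k) ** M)"
    by (simp add: matrix_scalar_ac scalar_matrix_assoc[symmetric] matpow_comm)
  also have "\<dots> = mat_exp t M ** M"
    unfolding mat_exp_def by (rule bounded_linear.suminf[OF lin_rmul exp_summable, symmetric])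
  finally show ?thesis .
qed

lemma mat_exp_transpose: "mat_exp t (transpose M) = transpose (mat_exp t (M::real^'a^'a))"
proof -
  have "transpose (mat_exp t M) = (\<Sum>k. transpose ((t ^ k / fact k) *\<^sub>R matpow M k))"
    unfolding mat_exp_def by (rule bounded_linear.suminf[OF lin_transpose exp_summable])
  then show ?thesis by (simp add: mat_exp_def transpose_scalar matpow_transpose)
qed

lemma general:
  fixes A :: "real^'n^'n" and B :: "real^'m^'n" and C :: "real^'n^'p"
    and Ah :: "real^'r^'r" and Bh :: "real^'m^'r" and Ch :: "real^'r^'p"
    and P :: "real^'r^'n" and Q :: "real^'n^'r"
  assumes uniq: "\<exists>!X. A ** X + X ** transpose Ah =
        - (B ** transpose Bh) + mat_exp T A ** B ** transpose Bh ** mat_exp T (transpose Ah)"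
    and P_eq: "A ** P + P ** transpose Ah =
        - (B ** transpose Bh) + mat_exp T A ** B ** transpose Bh ** mat_exp T (transpose Ah)"
    and Q_eq: "transpose Ah ** Q + Q ** A =
        - (transpose Ch ** C) + mat_exp T (transpose Ah) ** transpose Ch ** C ** mat_exp T A"
  shows "trace (C ** P ** transpose Ch) = trace (transpose Bh ** Q ** B)"
proof -
  define E where "E = mat_exp T A"
  define Eh where "Eh = mat_exp T Ah"
  have EA: "A ** E = E ** A" unfolding E_def by (rule mat_exp_comm)
  have EhAh: "transpose Eh ** transpose Ah = transpose Ah ** transpose Eh"
    unfolding Eh_def by (metis matrix_transpose_mul mat_exp_comm)
  have tE: "mat_exp T (transpose A) = transpose E" "mat_exp T (transpose Ah) = transpose Eh"
    unfolding E_def Eh_def by (rule mat_exp_transpose)+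
  define L where "L = (\<lambda>X::real^'r^'n. A ** X + X ** transpose Ah)"
  define R where "R = - (B ** transpose Bh) + E ** B ** transpose Bh ** transpose Eh"
  have uq: "\<And>X. L X = R \<Longrightarrow> X = P"
    using uniq P_eq unfolding L_def R_def E_def Eh_def tE[unfolded E_def Eh_def] by blast
  have LP: "L P = R"
    using P_eq unfolding L_def R_def E_def Eh_def tE[unfolded E_def Eh_def] .
  have linL: "linear L"
    unfolding L_def linear_conv_bounded_linear
    by (intro bounded_linear_add lin_lmul lin_rmul)
  have Ldiff: "L (X - Y) = L X - L Y" for X Y
    unfolding L_def by (simp add: mm_diff_l mm_diff_r)
  have "inj L"
  proof (rule injI)
    fix x y assume "L x = L y"
    then have "L (P + (x - y)) = R"
      using LP linear_add[OF linL] Ldiff by simp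
    then have "P + (x - y) = P" by (rule uq)
    then show "x = y" by simp
  qed
  then have "surj L" using linL linear_injective_imp_surjective by blast
  then obtain P0 where P0: "L P0 = - (B ** transpose Bh)" by (metis surjD)
  have "L (E ** P0 ** transpose Eh) = E ** L P0 ** transpose Eh"
    unfolding L_def
    by (simp add: mm_add_l mm_add_r matrix_mul_assoc EA)
       (simp add: matrix_mul_assoc[symmetric] EhAh)
  then have "L (P0 - E ** P0 ** transpose Eh) = R"
    unfolding Ldiff P0 R_def by (simp add: mm_neg_l mm_neg_r matrix_mul_assoc)
  then have Pdef: "P = P0 - E ** P0 ** transpose Eh" using uq by simp
  have Q': "transpose Ah ** Q + Q ** A = - (transpose Ch ** C) + transpose Eh ** transpose Ch ** C ** E"
    using Q_eq unfolding tE E_def Eh_def .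
  have "trace (transpose Bh ** Q ** B) = trace (Q ** (B ** transpose Bh))"
    by (metis matrix_mul_assoc trace_mul_sym)
  also have "\<dots> = - trace (Q ** L P0)"
    by (simp add: P0 mm_neg_l trace_neg)
  also have "\<dots> = - trace (Q ** A ** P0) - trace (Q ** P0 ** transpose Ah)"
    by (simp add: L_def mm_add_l trace_add matrix_mul_assoc)
  also have "trace (Q ** P0 ** transpose Ah) = trace (transpose Ah ** Q ** P0)"
    by (metis matrix_mul_assoc trace_mul_sym)
  also have "- trace (Q ** A ** P0) - trace (transpose Ah ** Q ** P0) = - trace ((transpose Ah ** Q + Q ** A) ** P0)"
    by (simp add: mm_add_r trace_add)
  also have "\<dots> = trace (transpose Ch ** C ** P0) - trace (transpose Eh ** transpose Ch ** C ** E ** P0)"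
    by (simp add: Q' mm_add_r mm_neg_r mm_diff_r trace_add trace_neg trace_sub)
  also have "\<dots> = trace (C ** P0 ** transpose Ch) - trace (C ** E ** P0 ** transpose Eh ** transpose Ch)"
  proof -
    have "trace (transpose Ch ** C ** P0) = trace (C ** P0 ** transpose Ch)"
      by (metis matrix_mul_assoc trace_mul_sym)
    moreover have "trace (transpose Eh ** transpose Ch ** C ** E ** P0) = trace (C ** E ** P0 ** transpose Eh ** transpose Ch)"
    proof -
      have "trace (transpose Eh ** transpose Ch ** C ** E ** P0) = trace ((transpose Ch ** C ** E ** P0) ** transpose Eh)"
        by (metis matrix_mul_assoc trace_mul_sym)
      also have "\<dots> = trace (transpose Ch ** (C ** E ** P0 ** transpose Eh))"
        by (simp add: matrix_mul_assoc)
      also have "\<dots> = trace (C ** E ** P0 ** transpose Eh ** transpose Ch)"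
        by (rule trace_mul_sym)
      finally show ?thesis .
    qed
    ultimately show ?thesis by simp
  qed
  also have "\<dots> = trace (C ** P ** transpose Ch)"
    by (simp add: Pdef mm_diff_l mm_diff_r trace_sub matrix_mul_assoc)
  finally show ?thesis by simp
qed

theorem proposition2p3:
  fixes A :: "real^'n^'n" and B :: "real^'m^'n" and C :: "real^'n^'p"
    and Ah :: "real^'r^'r" and Bh :: "real^'m^'r" and Ch :: "real^'r^'p"
    and T :: real
    and P :: "real^'n^'n" and P2 :: "real^'r^'n" and Ph :: "real^'r^'r"
    and Q :: "real^'n^'n" and Q2 :: "real^'n^'r" and Qh :: "real^'r^'r"
  assumes hA: "hurwitz A"
    and hT: "T > 0"
    and P_unique: "\<exists>!X. A ** X + X ** transpose A =
        - (B ** transpose B) + mat_exp T A ** B ** transpose B ** mat_exp T (transpose A)"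
    and P_eq: "A ** P + P ** transpose A =
        - (B ** transpose B) + mat_exp T A ** B ** transpose B ** mat_exp T (transpose A)"
    and P2_unique: "\<exists>!X. A ** X + X ** transpose Ah =
        - (B ** transpose Bh) + mat_exp T A ** B ** transpose Bh ** mat_exp T (transpose Ah)"
    and P2_eq: "A ** P2 + P2 ** transpose Ah =
        - (B ** transpose Bh) + mat_exp T A ** B ** transpose Bh ** mat_exp T (transpose Ah)"
    and Ph_unique: "\<exists>!X. Ah ** X + X ** transpose Ah =
        - (Bh ** transpose Bh) + mat_exp T Ah ** Bh ** transpose Bh ** mat_exp T (transpose Ah)"
    and Ph_eq: "Ah ** Ph + Ph ** transpose Ah =
        - (Bh ** transpose Bh) + mat_exp T Ah ** Bh ** transpose Bh ** mat_exp T (transpose Ah)"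
    and Q_eq: "transpose A ** Q + Q ** A =
        - (transpose C ** C) + mat_exp T (transpose A) ** transpose C ** C ** mat_exp T A"
    and Q2_eq: "transpose Ah ** Q2 + Q2 ** A =
        - (transpose Ch ** C) + mat_exp T (transpose Ah) ** transpose Ch ** C ** mat_exp T A"
    and Qh_eq: "transpose Ah ** Qh + Qh ** Ah =
        - (transpose Ch ** Ch) + mat_exp T (transpose Ah) ** transpose Ch ** Ch ** mat_exp T Ah"
  shows "trace (C ** P ** transpose C) = trace (transpose B ** Q ** B)
       \<and> trace (Ch ** Ph ** transpose Ch) = trace (transpose Bh ** Qh ** Bh)
       \<and> trace (C ** P2 ** transpose Ch) = trace (transpose Bh ** Q2 ** B)"
proof (intro conjI)
  show "trace (C ** P ** transpose C) = trace (transpose B ** Q ** B)"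
    by (rule general[OF P_unique P_eq Q_eq])
  show "trace (Ch ** Ph ** transpose Ch) = trace (transpose Bh ** Qh ** Bh)"
    by (rule general[OF Ph_unique Ph_eq Qh_eq])
  show "trace (C ** P2 ** transpose Ch) = trace (transpose Bh ** Q2 ** B)"
    by (rule general[OF P2_unique P2_eq Q2_eq])
qed

end
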